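(* In the setting below, the quasi-cyclic code $C$ is Hermitian LCD if and only if all of the following hold: (I) $g(x)$ is self-conjugate-reciprocal; (II) $l(x)$ is self-conjugate-reciprocal; (III) $\gcd(t_{22}(x),g_{12}(x))=1$; (IV) $\gcd\big(r_{22}(x),\ g_{11}(x)\hat g_{11}(x)+g_{12}(x)\hat g_{12}(x)\big)=1$.
   Context: Let $q$ be a prime power, $F=\mathbb{F}_{q^2}$, $m\ge1$ with $\gcd(q,m)=1$, and $R=F[x]/\langle x^m-1\rangle$; elements of $R$ are represented by polynomials of degree $<m$ and identified with their coefficient vectors in $F^m$. A quasi-cyclic code of length $2m$ and index $2$ is an $R$-submodule $C\subseteq R^2$. The Hermitian inner product of $(a_1,a_2),(b_1,b_2)\in R^2$ is $\sum_k a_{1,k}b_{1,k}^q+\sum_k a_{2,k}b_{2,k}^q$, where $a_{i,k},b_{i,k}$ are the coefficients of $x^k$; $C^{\perp_h}$ is the dual with respect to it, and $C$ is Hermitian LCD if $C\cap C^{\perp_h}=\{0\}$. For $f=\sum_{k=0}^{d} f_kx^k\in F[x]$ of degree $d$, its conjugate is $f^{[q]}=\sum f_k^qx^k$, its conjugate-reciprocal is $f^{\dagger}(x)=x^{d}f^{[q]}(x^{-1})$, and $f$ is self-conjugate-reciprocal if $f^\dagger=\alpha f$ for some $\alpha\in F$. For $f$ of degree at most $m$, its conjugate transpose is $\hat f(x)=x^m f^{[q]}(x^{-1})$. Suppose $C$ is generated as an $R$-module by $(g_{11}(x),g_{12}(x))$ and $(0,g_{22}(x))$, where $g_{11},g_{12},g_{22}\in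 F[x]$ satisfy: $g_{11}\mid x^m-1$, $g_{22}\mid x^m-1$, $\deg g_{12}<\deg g_{22}$, and $g_{11}g_{22}\mid (x^m-1)g_{12}$. Define $g=\gcd(g_{11},g_{22})$, $l=(x^m-1)/\mathrm{lcm}(g_{11},g_{22})$, $g_{11}=g\,g_{11}'$, $g_{22}=g\,g_{22}'$, $r_{22}=\gcd(g_{22}',g_{22}'^{\dagger})$, $t_{22}=g_{22}'/r_{22}$. *)

theory Defs
  imports "HOL-Computational_Algebra.Computational_Algebra"
begin

definition xm1 :: "nat \<Rightarrow> 'a::field poly" where
  "xm1 m = monom 1 m - 1"

(* conjugate-reciprocal f^dagger(x) = x^(deg f) f^[q](x^-1), conjugation c \<mapsto> c^q *)
definition conj_recip :: "nat \<Rightarrow> 'a::field poly \<Rightarrow> 'a poly" where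
  "conj_recip q f = (\<Sum>k\<le>degree f. monom (coeff f k ^ q) (degree f - k))"

definition self_conj_recip :: "nat \<Rightarrow> 'a::field poly \<Rightarrow> bool" where
  "self_conj_recip q f \<longleftrightarrow> (\<exists>\<alpha>. conj_recip q f = smult \<alpha> f)"

(* conjugate transpose hat f(x) = x^m f^[q](x^-1), for deg f \<le> m *)
definition conj_transpose :: "nat \<Rightarrow> nat \<Rightarrow> 'a::field poly \<Rightarrow> 'a poly" where
  "conj_transpose q m f = (\<Sum>k\<le>m. monom (coeff f k ^ q) (m - k))"

(* R^2, elements of R = F[x]/<x^m-1> represented by polynomials of degree < m *)
definition R2 :: "nat \<Rightarrow> ('a::field poly \<times> 'a poly) set" where
  "R2 m = {(u1, u2). degree u1 < m \<and> degree u2 < m}"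

definition qc_code :: "nat \<Rightarrow> 'a::field poly \<Rightarrow> 'a poly \<Rightarrow> 'a poly \<Rightarrow> ('a poly \<times> 'a poly) set" where
  "qc_code m g11 g12 g22 =
     {((a * g11 + b * 0) mod xm1 m, (a * g12 + b * g22) mod xm1 m) | a b. True}"

definition herm :: "nat \<Rightarrow> nat \<Rightarrow> ('a::field poly \<times> 'a poly) \<Rightarrow> ('a poly \<times> 'a poly) \<Rightarrow> 'a" where
  "herm q m u v = (\<Sum>k<m. coeff (fst u) k * coeff (fst v) k ^ q)
                + (\<Sum>k<m. coeff (snd u) k * coeff (snd v) k ^ q)"

definition herm_dual :: "nat \<Rightarrow> nat \<Rightarrow> ('a::field poly \<times> 'a poly) set \<Rightarrow> ('a poly \<times> 'a poly) set" where
  "herm_dual q m C = {v \<in> R2 m. \<forall>c\<in>C. herm q m c v = 0}"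

definition herm_LCD :: "nat \<Rightarrow> nat \<Rightarrow> ('a::field poly \<times> 'a poly) set \<Rightarrow> bool" where
  "herm_LCD q m C \<longleftrightarrow> C \<inter> herm_dual q m C = {(0, 0)}"

end

theory Submission
  imports Defs "HOL-Number_Theory.Residues"
begin

hide_const (open) up_ring.coeff up_ring.monom module.smult


lemma finite_field_pow_card:
  fixes x :: "'a :: {finite, field}"
  shows "x ^ card (UNIV :: 'a set) = x"
proof (cases "x = 0")
  case False
  have "x * (\<Prod>y\<in>UNIV-{0}. x * y) = x * x ^ (card (UNIV :: 'a set) - 1) * \<Prod>(UNIV-{0})"
    by (simp add: prod.distrib mult_ac)
  also have "x * x ^ (card (UNIV :: 'a set) - 1) = x ^ Suc (card (UNIV :: 'a set) - 1)"
    by (subst power_Suc) auto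
  also have "Suc (card (UNIV :: 'a set) - 1) = card (UNIV :: 'a set)"
    using finite_UNIV_card_ge_0[where ?'a = 'a] by simp
  also have "(\<Prod>y\<in>UNIV-{0}. x * y) = (\<Prod>y\<in>UNIV-{0}. y)"
    by (rule prod.reindex_bij_witness[of _ "\<lambda>y. y / x" "\<lambda>y. x * y"]) (use False in auto)
  finally show ?thesis
    by simp
qed (use finite_UNIV_card_ge_0[where ?'a = 'a] in auto)

lemma frob_facts:
  fixes p e q m :: nat
  assumes "prime p" "e \<ge> 1" "q = p ^ e" "card (UNIV :: 'a::{finite,field} set) = q ^ 2"
    "coprime q m"
  shows "\<And>x y :: 'a. (x + y) ^ q = x ^ q + y ^ q"
    and "\<And>x :: 'a. (x ^ q) ^ q = x"
    and "(of_nat m :: 'a) \<noteq> 0"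
proof -
  have cp: "CHAR('a) > 0" by (rule finite_imp_CHAR_pos) simp
  have pc: "prime CHAR('a)" using cp prime_CHAR_semidom by blast
  have "CHAR('a) dvd (p ^ e) ^ 2" using CHAR_dvd_CARD[where 'a='a] assms(3,4) by simp
  hence "CHAR('a) dvd p ^ e" using pc prime_dvd_power by blast
  hence "CHAR('a) dvd p" using pc prime_dvd_power by blast
  hence cpe: "CHAR('a) = p" using pc assms(1) primes_dvd_imp_eq by blast
  show "\<And>x y :: 'a. (x + y) ^ q = x ^ q + y ^ q"
    by (rule freshmans_dream') (use pc cpe assms(3) in auto)
  show "\<And>x :: 'a. (x ^ q) ^ q = x"
    using finite_field_pow_card assms(4) by (metis power_mult power2_eq_square)
  show "(of_nat m :: 'a) \<noteq> 0"
  proof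
    assume "(of_nat m :: 'a) = 0"
    hence "p dvd m" using cpe of_nat_eq_0_iff_char_dvd by blast
    moreover have "p dvd q" using assms(2,3) by (simp add: dvd_power)
    ultimately show False using assms(5,1)
      using coprime_common_divisor[of q m p] not_prime_unit by auto
  qed
qed



locale qcl =
  fixes q m :: nat and ty :: "'a::{finite,field_gcd} itself"
  assumes fadd: "\<And>x y::'a. (x + y) ^ q = x ^ q + y ^ q"
    and finv: "\<And>x::'a. (x ^ q) ^ q = x"
    and mpos: "m \<ge> 1"
    and mnz: "(of_nat m :: 'a) \<noteq> 0"
    and qpos: "q \<ge> 1"
begin

definition fr :: "'a \<Rightarrow> 'a" where "fr c = c ^ q"

lemma fr0[simp]: "fr 0 = 0" using qpos by (simp add: fr_def)
lemma fr1[simp]: "fr 1 = 1" by (simp add: fr_def)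
lemma fradd: "fr (x + y) = fr x + fr y" by (simp add: fr_def fadd)
lemma frmult: "fr (x * y) = fr x * fr y" by (simp add: fr_def power_mult_distrib)
lemma frfr[simp]: "fr (fr x) = x" by (simp add: fr_def finv)
lemma frneg: "fr (- x) = - fr x"
proof -
  have "fr (-x) + fr x = 0" by (metis fradd fr0 add.left_inverse)
  thus ?thesis by (simp add: eq_neg_iff_add_eq_0)
qed
lemma frdiff: "fr (x - y) = fr x - fr y" using fradd[of x "-y"] frneg[of y] by simp
lemma fr_eq0[simp]: "fr x = 0 \<longleftrightarrow> x = 0" by (metis frfr fr0)

definition M :: "'a poly \<Rightarrow> 'a poly" where "M u = map_poly fr u"

lemma coeff_M[simp]: "coeff (M u) n = fr (coeff u n)" by (simp add: M_def coeff_map_poly)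
lemma M_add: "M (u + v) = M u + M v" by (rule poly_eqI) (simp add: fradd)
lemma M_diff: "M (u - v) = M u - M v" by (rule poly_eqI) (simp add: frdiff)
lemma M_neg: "M (- u) = - M u" by (rule poly_eqI) (simp add: frneg)
lemma M_smult: "M (smult c u) = smult (fr c) (M u)" by (rule poly_eqI) (simp add: frmult)
lemma M_pCons: "M (pCons a u) = pCons (fr a) (M u)" by (rule poly_eqI) (simp add: coeff_pCons split: nat.split)
lemma M_0[simp]: "M 0 = 0" by (rule poly_eqI) simp
lemma M_mult: "M (u * v) = M u * M v"
proof (induction u)
  case (pCons a u)
  show ?case by (simp add: M_pCons M_add M_smult pCons.IH)
qed simp
lemma M_M[simp]: "M (M u) = u" by (rule poly_eqI) simp
lemma M_1[simp]: "M 1 = 1" by (simp add: M_def)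
lemma M_const[simp]: "M [:c:] = [:fr c:]" by (rule poly_eqI) (simp add: coeff_pCons split: nat.split)
lemma M_monom[simp]: "M (monom c n) = monom (fr c) n" by (rule poly_eqI) (simp add: coeff_monom)
lemma degree_M[simp]: "degree (M u) = degree u" unfolding M_def by (rule degree_map_poly) simp
lemma M_eq0[simp]: "M u = 0 \<longleftrightarrow> u = 0" by (metis M_M M_0)
lemma M_pcompose: "M (pcompose u v) = pcompose (M u) (M v)"
  by (induction u) (simp_all add: pcompose_pCons M_pCons M_add M_mult)
lemma M_pow: "M (u ^ n) = M u ^ n" by (induction n) (simp_all add: M_mult)

definition N :: "'a poly" where "N = xm1 m"
definition X1 :: "'a poly" where "X1 = monom 1 (m - 1)"
definition sg :: "'a poly \<Rightarrow> 'a poly" where "sg u = pcompose (M u) X1"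

lemma sg_add: "sg (u + v) = sg u + sg v" by (simp add: sg_def M_add pcompose_add)
lemma sg_neg: "sg (- u) = - sg u" unfolding sg_def M_neg by (rule pcompose_uminus)
lemma sg_diff: "sg (u - v) = sg u - sg v" unfolding diff_conv_add_uminus sg_add sg_neg ..
lemma sg_mult: "sg (u * v) = sg u * sg v" unfolding sg_def M_mult by (rule pcompose_mult)
lemma sg_0[simp]: "sg 0 = 0" by (simp add: sg_def)
lemma sg_const[simp]: "sg [:c:] = [:fr c:]" by (simp add: sg_def)
lemma sg_smult: "sg (smult c u) = smult (fr c) (sg u)" by (simp add: sg_def M_smult pcompose_smult)

lemma pcompose_monom1: "pcompose (monom c n) r = smult c (r ^ n)"
  by (induction n) (simp_all add: monom_0 monom_Suc pcompose_pCons)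

lemma X1_pow: "X1 ^ n = monom 1 ((m - 1) * n)"
  by (simp add: X1_def monom_altdef power_mult)

lemma sg_monom: "sg (monom c n) = monom (fr c) ((m - 1) * n)"
  by (simp add: sg_def pcompose_monom1 X1_pow smult_monom)

lemma N_alt: "N = monom 1 m - 1" by (simp add: N_def xm1_def)

lemma N_dvd_pow: "N dvd monom 1 (k * m) - 1"
proof -
  have "monom (1::'a) (k * m) = (monom 1 m) ^ k"
    by (metis monom_altdef smult_1_left power_mult mult.commute)
  thus ?thesis by (simp add: N_alt power_diff_1_eq)
qed

lemma N_dvd_monom_mod: "N dvd monom c n - monom c (n mod m)"
proof -
  have "monom c n = monom c (n mod m) * monom 1 ((n div m) * m)"
    by (simp add: mult_monom)
  hence "monom c n - monom c (n mod m) = monom c (n mod m) * (monom 1 ((n div m) * m) - 1)"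
    by (simp add: algebra_simps)
  thus ?thesis using N_dvd_pow by (metis dvd_mult)
qed

lemma N_dvd_monom_cong: "a mod m = b mod m \<Longrightarrow> N dvd monom c a - monom c b"
proof -
  assume h: "a mod m = b mod m"
  have "monom c a - monom c b = (monom c a - monom c (a mod m)) - (monom c b - monom c (b mod m))"
    using h by simp
  thus ?thesis using N_dvd_monom_mod by (metis dvd_diff)
qed

lemma pcompose_cong: "N dvd A - B \<Longrightarrow> N dvd pcompose u A - pcompose u B"
proof (induction u)
  case 0 then show ?case by simp
next
  case (pCons a u)
  have "pcompose (pCons a u) A - pcompose (pCons a u) B
        = A * (pcompose u A - pcompose u B) + (A - B) * pcompose u B"
    by (simp add: pcompose_pCons algebra_simps)
  thus ?case using pCons by (metis dvd_add dvd_mult dvd_mult2)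
qed

lemma N_nz: "N \<noteq> 0"
proof
  assume "N = 0"
  hence "coeff N m = 0" by simp
  thus False using mpos by (simp add: N_alt coeff_monom)
qed

lemma degree_N: "degree N = m"
proof (rule antisym)
  show "degree N \<le> m" unfolding N_alt
    by (rule degree_diff_le) (simp_all add: degree_monom_le)
  show "m \<le> degree N" using mpos by (intro le_degree) (simp add: N_alt coeff_monom)
qed

lemma sg_N: "N dvd sg N"
proof -
  have "sg N = monom 1 ((m - 1) * m) - 1"
    by (simp add: N_alt sg_diff sg_monom one_pCons)
  thus ?thesis using N_dvd_pow by (metis mult.commute)
qed

lemma sg_cong: "N dvd A - B \<Longrightarrow> N dvd sg A - sg B"
proof -
  assume "N dvd A - B"
  then obtain k where "A - B = N * k" by (auto elim: dvdE)
  hence "sg A - sg B = sg N * sg k" by (metis sg_diff sg_mult)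
  thus ?thesis using sg_N by simp
qed

lemma sg_dvd: "N dvd A \<Longrightarrow> N dvd sg A"
  using sg_cong[of A 0] by simp

lemma sg_sg: "N dvd sg (sg u) - u"
proof -
  have MX: "M X1 = X1" by (simp add: X1_def)
  have "sg (sg u) = pcompose (pcompose u X1) X1"
    by (simp add: sg_def M_pcompose MX)
  also have "\<dots> = pcompose u (pcompose X1 X1)" by (simp add: pcompose_assoc)
  also have "pcompose X1 X1 = X1 ^ (m - 1)" unfolding X1_def by (simp add: pcompose_monom1)
  also have "\<dots> = monom 1 ((m - 1) * (m - 1))" by (rule X1_pow)
  finally have e: "sg (sg u) = pcompose u (monom 1 ((m - 1) * (m - 1)))" .
  have "((m - 1) * (m - 1)) mod m = 1 mod m"
  proof (cases "m = 1")
    case False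
    hence m2: "m \<ge> 2" using mpos by linarith
    define k where "k = m - 2"
    have k: "m = k + 2" using m2 k_def by simp
    hence "(m - 1) * (m - 1) = 1 + (m - 2) * m" by (simp add: ring_distribs)
    thus ?thesis by (simp only: mod_mult_self1)
  qed simp
  hence "N dvd monom 1 ((m - 1) * (m - 1)) - monom 1 1"
    by (rule N_dvd_monom_cong)
  moreover have "monom (1::'a) 1 = [:0, 1:]" by (simp add: monom_Suc monom_0)
  ultimately have "N dvd monom 1 ((m - 1) * (m - 1)) - [:0, 1:]" by (simp only:)
  hence "N dvd pcompose u (monom 1 ((m - 1) * (m - 1))) - pcompose u [:0,1:]"
    by (rule pcompose_cong)
  thus ?thesis by (simp only: e pcompose_idR)
qed

end


context qcl begin

lemma conj_recip_alt: "conj_recip q f = reflect_poly (M f)"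
proof (rule poly_eqI)
  fix n
  let ?d = "degree f"
  have "coeff (conj_recip q f) n = (\<Sum>k\<le>?d. if ?d - k = n then (coeff f k) ^ q else 0)"
    by (simp add: conj_recip_def coeff_sum coeff_monom)
  also have "\<dots> = (\<Sum>k\<le>?d. if k = ?d - n \<and> n \<le> ?d then (coeff f k) ^ q else 0)"
    by (rule sum.cong) auto
  also have "\<dots> = (if n \<le> ?d then fr (coeff f (?d - n)) else 0)"
    by (cases "n \<le> ?d") (simp_all add: sum.delta fr_def)
  also have "\<dots> = coeff (reflect_poly (M f)) n"
    by (simp add: coeff_reflect_poly)
  finally show "coeff (conj_recip q f) n = coeff (reflect_poly (M f)) n" .
qed

lemma M_reflect: "M (reflect_poly u) = reflect_poly (M u)"
  by (rule poly_eqI) (simp add: coeff_reflect_poly)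

lemma cr_mult: "conj_recip q ((f::'a poly) * g) = conj_recip q f * conj_recip q g"
  by (simp add: conj_recip_alt M_mult reflect_poly_mult)

lemma cr_const: "conj_recip q [:c::'a:] = [:fr c:]"
  by (simp add: conj_recip_alt)

lemma cr_smult: "conj_recip q (smult c (f::'a poly)) = smult (fr c) (conj_recip q f)"
  using cr_mult[of "[:c:]" f] by (simp add: cr_const)

lemma cr_cr: "coeff (f::'a poly) 0 \<noteq> 0 \<Longrightarrow> conj_recip q (conj_recip q f) = f"
  by (simp add: conj_recip_alt M_reflect)

lemma coeff0_cr: "coeff (conj_recip q (f::'a poly)) 0 = fr (lead_coeff f)"
  by (simp add: conj_recip_alt)

lemma degree_cr: "coeff (f::'a poly) 0 \<noteq> 0 \<Longrightarrow> degree (conj_recip q f) = degree f"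
  by (simp add: conj_recip_alt)

lemma cr_eq0[simp]: "conj_recip q (f::'a poly) = 0 \<longleftrightarrow> f = 0"
  by (simp add: conj_recip_alt)

lemma coeff_N: "coeff N n = (if n = m then 1 else if n = 0 then -1 else 0)"
  using mpos by (auto simp: N_alt coeff_monom)

lemma coeff0_N: "coeff N 0 = -1" using mpos by (simp add: coeff_N)

lemma cr_N: "conj_recip q N = - N"
proof -
  have MN: "M N = N" by (rule poly_eqI) (simp add: coeff_N frneg)
  show ?thesis unfolding conj_recip_alt MN
    by (rule poly_eqI) (use mpos in \<open>auto simp: coeff_reflect_poly degree_N coeff_N\<close>)
qed

lemma dvdN_coeff0: "d dvd N \<Longrightarrow> coeff d 0 \<noteq> 0"
proof
  assume "d dvd N" "coeff d 0 = 0"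
  then obtain e where "N = d * e" by (auto elim: dvdE)
  hence "poly N 0 = poly d 0 * poly e 0" by simp
  hence "poly N 0 = 0" using \<open>coeff d 0 = 0\<close> by (simp only: poly_0_coeff_0 mult_zero_left)
  thus False by (simp add: poly_0_coeff_0 coeff0_N)
qed

lemma dvdN_cr: "d dvd N \<Longrightarrow> conj_recip q d dvd N"
proof -
  assume "d dvd N"
  then obtain e where "N = d * e" by (auto elim: dvdE)
  hence "- N = conj_recip q d * conj_recip q e" using cr_N cr_mult by metis
  hence "conj_recip q d dvd - N" by simp
  thus ?thesis by simp
qed

lemma dvdN_ne0: "d dvd N \<Longrightarrow> d \<noteq> 0" using N_nz by auto

lemma sg_sum: "sg (\<Sum>k\<in>A. f k) = (\<Sum>k\<in>A. sg (f k))"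
  by (induction A rule: infinite_finite_induct) (simp_all add: sg_add)

lemma sg_as_sum': "degree u \<le> n \<Longrightarrow> sg u = (\<Sum>k\<le>n. monom (fr (coeff u k)) ((m - 1) * k))"
proof -
  assume "degree u \<le> n"
  hence "sg u = sg (\<Sum>k\<le>n. monom (coeff u k) k)" by (simp add: poly_as_sum_of_monoms')
  also have "\<dots> = (\<Sum>k\<le>n. sg (monom (coeff u k) k))" by (rule sg_sum)
  finally show ?thesis by (simp add: sg_monom)
qed

lemma dvd_sum_diff:
  assumes "\<And>k. k \<in> A \<Longrightarrow> N dvd f k - g k"
  shows "N dvd (\<Sum>k\<in>A. f k) - (\<Sum>k\<in>A. g k)"
proof -
  have "(\<Sum>k\<in>A. f k) - (\<Sum>k\<in>A. g k) = (\<Sum>k\<in>A. f k - g k)" by (simp add: sum_subtractf)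
  thus ?thesis using assms by (simp add: dvd_sum)
qed

lemma sg_cr: "N dvd sg u - monom 1 ((m - 1) * degree u) * conj_recip q u"
proof -
  let ?d = "degree u"
  have "monom 1 ((m - 1) * ?d) * conj_recip q u
        = (\<Sum>k\<le>?d. monom (fr (coeff u k)) ((m - 1) * ?d + (?d - k)))"
    by (simp add: conj_recip_def sum_distrib_left mult_monom fr_def)
  moreover have "N dvd sg u - (\<Sum>k\<le>?d. monom (fr (coeff u k)) ((m - 1) * ?d + (?d - k)))"
    unfolding sg_as_sum'[OF order_refl]
  proof (rule dvd_sum_diff, rule N_dvd_monom_cong)
    fix k assume "k \<in> {..?d}"
    then obtain j where j: "?d = k + j" by (auto dest: le_Suc_ex)
    obtain m' where m': "m = m' + 1" using mpos by (metis le_add_diff_inverse2)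
    have "(m - 1) * ?d + (?d - k) = (m - 1) * k + j * m"
      unfolding j m' by (simp add: ring_distribs)
    thus "(m - 1) * k mod m = ((m - 1) * ?d + (?d - k)) mod m" by simp
  qed
  ultimately show ?thesis by simp
qed

lemma hat_sg: "degree u \<le> m \<Longrightarrow> N dvd conj_transpose q m u - sg u"
proof -
  assume du: "degree u \<le> m"
  have "conj_transpose q m u = (\<Sum>k\<le>m. monom (fr (coeff u k)) (m - k))"
    by (simp add: conj_transpose_def fr_def)
  moreover have "N dvd (\<Sum>k\<le>m. monom (fr (coeff u k)) (m - k)) - sg u"
    unfolding sg_as_sum'[OF du]
  proof (rule dvd_sum_diff, rule N_dvd_monom_cong)
    fix k assume "k \<in> {..m}"
    hence km: "k \<le> m" by simp
    show "(m - k) mod m = (m - 1) * k mod m"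
    proof (cases k)
      case 0 thus ?thesis by simp
    next
      case (Suc k')
      then obtain j where j: "m = k + j" using km by (auto dest: le_Suc_ex)
      have "(m - 1) * k = (m - k) + k' * m" unfolding j Suc by (simp add: ring_distribs)
      thus ?thesis by simp
    qed
  qed
  ultimately show ?thesis by simp
qed

lemma x_coprime: "coeff (d::'a poly) 0 \<noteq> 0 \<Longrightarrow> coprime d (monom 1 k)"
proof -
  assume d0: "coeff d 0 \<noteq> 0"
  have px: "prime_elem [:0, 1::'a:]"
    using irreducible_linear_field_poly[of 1 0] prime_elem_iff_irreducible by auto
  have "\<not> [:0, 1:] dvd d" using d0 dvd_iff_poly_eq_0[of 0 d] by (simp add: poly_0_coeff_0)
  hence "coprime [:0,1:] d" using px prime_elem_imp_coprime by blast
  hence "coprime d ([:0,1:] ^ k)" by (simp add: coprime_commute)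
  thus ?thesis by (simp add: monom_altdef)
qed

lemma cancel_x: "coeff (d::'a poly) 0 \<noteq> 0 \<Longrightarrow> d dvd monom 1 k * A \<longleftrightarrow> d dvd A"
  using x_coprime coprime_dvd_mult_right_iff by blast

lemma dvd_via_N: "d dvd N \<Longrightarrow> N dvd A - B \<Longrightarrow> d dvd A \<longleftrightarrow> d dvd B"
proof -
  assume "d dvd N" "N dvd A - B"
  hence "d dvd A - B" by (rule dvd_trans)
  hence "d dvd (A - B) + B \<longleftrightarrow> d dvd B" by (rule dvd_add_right_iff)
  thus ?thesis by simp
qed

lemma L2: "d dvd N \<Longrightarrow> d dvd sg h \<longleftrightarrow> conj_recip q d dvd h"
proof
  assume dN: "d dvd N" and "conj_recip q d dvd h"
  then obtain w where hw: "h = conj_recip q d * w" by (auto elim: dvdE)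
  have e: "conj_recip q (conj_recip q d) = d" using cr_cr dvdN_coeff0 dN by blast
  have "N dvd sg (conj_recip q d) - monom 1 ((m - 1) * degree (conj_recip q d)) * d"
    using sg_cr[of "conj_recip q d"] by (simp only: e)
  hence "d dvd sg (conj_recip q d) \<longleftrightarrow> d dvd monom 1 ((m - 1) * degree (conj_recip q d)) * d"
    by (rule dvd_via_N[OF dN])
  hence "d dvd sg (conj_recip q d)" by simp
  thus "d dvd sg h" by (simp add: hw sg_mult)
next
  assume dN: "d dvd N" and "d dvd sg h"
  then obtain w where hw: "sg h = d * w" by (auto elim: dvdE)
  have cN: "conj_recip q d dvd N" by (rule dvdN_cr[OF dN])
  have "conj_recip q d dvd sg d"
    using dvd_via_N[OF cN sg_cr[of d]] by simp
  hence "conj_recip q d dvd sg (sg h)" by (simp add: hw sg_mult)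
  thus "conj_recip q d dvd h" using dvd_via_N[OF cN sg_sg[of h]] by simp
qed

lemma L3: "d dvd N \<Longrightarrow> d dvd conj_recip q h \<longleftrightarrow> conj_recip q d dvd h"
proof -
  assume dN: "d dvd N"
  have "d dvd conj_recip q h \<longleftrightarrow> d dvd monom 1 ((m - 1) * degree h) * conj_recip q h"
    using cancel_x dvdN_coeff0[OF dN] by blast
  also have "\<dots> \<longleftrightarrow> d dvd sg h" using dvd_via_N[OF dN sg_cr[of h]] by simp
  also have "\<dots> \<longleftrightarrow> conj_recip q d dvd h" by (rule L2[OF dN])
  finally show ?thesis .
qed

definition bar :: "'a poly \<Rightarrow> 'a poly" where "bar f = normalize (conj_recip q f)"

lemma bar_dvd: "bar f dvd X \<longleftrightarrow> conj_recip q f dvd X" by (simp add: bar_def)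

lemma sg_1[simp]: "sg 1 = 1" using sg_const[of 1] by (simp add: one_pCons)

context
  fixes f :: "'a poly"
  assumes fp: "prime f" and fN: "f dvd N"
begin

lemma bar_N: "bar f dvd N" using dvdN_cr[OF fN] by (simp add: bar_dvd)

lemma bar_sg: "bar f dvd sg h \<longleftrightarrow> f dvd h"
proof -
  have "bar f dvd sg h \<longleftrightarrow> conj_recip q f dvd sg h" by (simp add: bar_dvd)
  also have "\<dots> \<longleftrightarrow> conj_recip q (conj_recip q f) dvd h" by (rule L2[OF dvdN_cr[OF fN]])
  also have "conj_recip q (conj_recip q f) = f" using cr_cr dvdN_coeff0 fN by blast
  finally show ?thesis .
qed

lemma sg_bar: "f dvd sg h \<longleftrightarrow> bar f dvd h"
  using L2[OF fN] by (simp add: bar_dvd)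

lemma cr_bar: "f dvd conj_recip q h \<longleftrightarrow> bar f dvd h"
  using L3[OF fN] by (simp add: bar_dvd)

lemma bar_prime: "prime (bar f)"
proof -
  have ne: "bar f \<noteq> 0" using bar_N dvdN_ne0 by blast
  have nu: "\<not> bar f dvd 1"
  proof
    assume "bar f dvd 1"
    hence "bar f dvd sg 1" by simp
    hence "f dvd 1" using bar_sg[of 1] by (simp only:)
    thus False using fp by (simp add: prime_def prime_elem_def)
  qed
  have "\<forall>a b. bar f dvd a * b \<longrightarrow> bar f dvd a \<or> bar f dvd b"
  proof (intro allI impI)
    fix a b assume "bar f dvd a * b"
    hence "f dvd sg a * sg b" using sg_bar sg_mult by metis
    hence "f dvd sg a \<or> f dvd sg b" using fp prime_dvd_mult_iff by blast
    thus "bar f dvd a \<or> bar f dvd b" using sg_bar by blast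
  qed
  thus ?thesis using ne nu by (simp add: prime_def prime_elem_def bar_def)
qed

lemma bar_bar: "bar (bar f) = f"
proof -
  have c: "bar (bar f) dvd h \<longleftrightarrow> f dvd h" for h
  proof -
    have "bar (bar f) dvd h \<longleftrightarrow> bar f dvd sg h" by (simp only: bar_dvd[of "bar f"] L2[OF bar_N])
    also have "\<dots> \<longleftrightarrow> f dvd h" by (rule bar_sg)
    finally show ?thesis .
  qed
  show ?thesis
  proof (rule associated_eqI)
    show "bar (bar f) dvd f" using c[of f] by simp
    show "f dvd bar (bar f)" using c[of "bar (bar f)"] by simp
    show "normalize (bar (bar f)) = bar (bar f)" by (simp add: bar_def)
    show "normalize f = f" using fp by (simp add: prime_def)
  qed
qed

lemma prime_not_sq: "\<not> f * f dvd N"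
proof
  assume "f * f dvd N"
  then obtain g where g: "N = f * f * g" by (auto elim: dvdE)
  have "pderiv N = f * (f * pderiv g + 2 * (g * pderiv f))"
    by (subst g) (simp add: pderiv_mult algebra_simps)
  hence "f dvd pderiv N" by simp
  moreover have "pderiv N = smult (of_nat m) (monom 1 (m - 1))"
    by (simp add: N_alt pderiv_diff pderiv_monom smult_monom)
  ultimately have "f dvd monom 1 (m - 1) * 1" using mnz by (simp add: dvd_smult_iff)
  hence "f dvd 1" using cancel_x dvdN_coeff0[OF fN] by blast
  thus False using fp by (simp add: prime_def prime_elem_def)
qed

end

lemma N_dvdI: "(\<And>f. prime f \<Longrightarrow> f dvd N \<Longrightarrow> f dvd X) \<Longrightarrow> N dvd X"
proof -
  assume H: "\<And>f. prime f \<Longrightarrow> f dvd N \<Longrightarrow> f dvd X"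
  show ?thesis
  proof (cases "X = 0")
    case False
    note X0 = this
    show ?thesis
    proof (rule multiplicity_le_imp_dvd[OF N_nz])
      fix p :: "'a poly" assume pp: "prime p"
      show "multiplicity p N \<le> multiplicity p X"
      proof (cases "p dvd N")
        case True
        have "\<not> 2 \<le> multiplicity p N"
        proof
          assume "2 \<le> multiplicity p N"
          hence "p ^ 2 dvd N" by (rule multiplicity_dvd')
          thus False using prime_not_sq[OF pp True] by (simp add: power2_eq_square)
        qed
        moreover have "1 \<le> multiplicity p X"
        proof -
          have "p dvd X" by (rule H[OF pp True])
          moreover have "prime_elem p" using pp by (simp add: prime_def)
          ultimately have "multiplicity p X > 0" using prime_multiplicity_gt_zero_iff X0 by blast
          thus ?thesis by simp
        qed
        ultimately show ?thesis by linarith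
      next
        case False
        hence "multiplicity p N = 0" using pp N_nz prime_elem_multiplicity_eq_zero_iff by auto
        thus ?thesis by simp
      qed
    qed
  qed simp
qed

end


context qcl begin

lemma N_dvd_mod: "N dvd A - A mod N"
  using mod_eq_dvd_iff[of A N "A mod N"] by simp

lemma deg_mod: "degree (A mod N) < m"
  using degree_mod_less[OF N_nz, of A] degree_N mpos by auto

lemma modN_eq: "N dvd A - B \<Longrightarrow> degree B < m \<Longrightarrow> A mod N = B"
proof -
  assume "N dvd A - B" "degree B < m"
  hence "A mod N = B mod N" using mod_eq_dvd_iff by blast
  also have "B mod N = B" using \<open>degree B < m\<close> degree_N by (simp add: mod_poly_less)
  finally show ?thesis .
qed

definition Lf :: "'a poly \<Rightarrow> 'a" where "Lf A = coeff (A mod N) 0"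

lemma Lf_add: "Lf (A + B) = Lf A + Lf B"
proof -
  have "N dvd (A + B) - (A mod N + B mod N)"
    using N_dvd_mod[of A] N_dvd_mod[of B] dvd_add
    by (metis add_diff_add)
  moreover have "degree (A mod N + B mod N) \<le> m - 1"
    using deg_mod[of A] deg_mod[of B] by (intro degree_add_le) auto
  hence "degree (A mod N + B mod N) < m" using mpos by linarith
  ultimately have "(A + B) mod N = A mod N + B mod N" by (rule modN_eq)
  thus ?thesis by (simp add: Lf_def)
qed

lemma Lf_0[simp]: "Lf 0 = 0" by (simp add: Lf_def)

lemma Lf_sum: "Lf (\<Sum>i\<in>A. f i) = (\<Sum>i\<in>A. Lf (f i))"
  by (induction A rule: infinite_finite_induct) (simp_all add: Lf_add)

lemma Lf_monom: "Lf (monom c n) = (if n mod m = 0 then c else 0)"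
proof -
  have "degree (monom c (n mod m)) < m"
    using degree_monom_le[of c "n mod m"] mpos by (meson le_less_trans mod_less_divisor less_le_trans zero_less_one)
  hence "monom c n mod N = monom c (n mod m)" using N_dvd_monom_mod by (intro modN_eq)
  thus ?thesis by (simp add: Lf_def coeff_monom)
qed

lemma Lf_mod: "Lf (A mod N * B) = Lf (A * B)"
  by (simp add: Lf_def mod_mult_left_eq)

lemma Lf_dvd: "N dvd A \<Longrightarrow> Lf A = 0"
  by (simp add: Lf_def dvd_eq_mod_eq_0)

lemma poly_sum_lt: "degree u < m \<Longrightarrow> u = (\<Sum>i<m. monom (coeff u i) i)"
proof -
  assume "degree u < m"
  hence "degree u \<le> m - 1" by simp
  hence "u = (\<Sum>i\<le>m - 1. monom (coeff u i) i)" by (simp add: poly_as_sum_of_monoms')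
  also have "{..m - 1} = {..<m}" using mpos by auto
  finally show ?thesis .
qed

lemma mod_iff_eq: "i < m \<Longrightarrow> j < m \<Longrightarrow> (i + (m - j)) mod m = 0 \<longleftrightarrow> i = j"
proof
  assume ij: "i < m" "j < m" and h: "(i + (m - j)) mod m = 0"
  show "i = j"
  proof (rule ccontr)
    assume "i \<noteq> j"
    hence "i < j \<or> j < i" by auto
    thus False
    proof
      assume "i < j"
      hence "(i + (m - j)) mod m = i + (m - j)" using ij by simp
      thus False using h \<open>i < j\<close> ij by simp
    next
      assume "j < i"
      hence "i + (m - j) = (i - j) + 1 * m" using ij by simp
      hence "(i + (m - j)) mod m = (i - j) mod m" by (metis mod_mult_self1)
      also have "\<dots> = i - j" using ij by simp
      finally show False using h \<open>j < i\<close> by simp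
    qed
  qed
qed simp

lemma if_mod: "i < m \<Longrightarrow> j < m \<Longrightarrow> (if (i + (m - j)) mod m = 0 then X else 0) = (if j = i then X else 0)"
  using mod_iff_eq[of i j] by auto

lemma Lf_hat: "degree u < m \<Longrightarrow> degree v < m \<Longrightarrow>
   Lf (u * conj_transpose q m v) = (\<Sum>k<m. coeff u k * coeff v k ^ q)"
proof -
  assume du: "degree u < m" and dv: "degree v < m"
  have hv: "conj_transpose q m v = (\<Sum>k<m. monom (coeff v k ^ q) (m - k))"
  proof -
    have "{..m} = insert m {..<m}" by auto
    moreover have "coeff v m = 0" using dv by (simp add: coeff_eq_0)
    ultimately show ?thesis using qpos by (simp add: conj_transpose_def)
  qed
  have "u * conj_transpose q m v = (\<Sum>i<m. \<Sum>k<m. monom (coeff u i * coeff v k ^ q) (i + (m - k)))"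
    by (subst poly_sum_lt[OF du]) (simp add: hv sum_distrib_left sum_distrib_right mult_monom, rule sum.swap)
  hence "Lf (u * conj_transpose q m v) =
     (\<Sum>i<m. \<Sum>k<m. if (i + (m - k)) mod m = 0 then coeff u i * coeff v k ^ q else 0)"
    by (simp only: Lf_sum Lf_monom)
  also have "\<dots> = (\<Sum>i<m. \<Sum>k<m. if k = i then coeff u i * coeff v k ^ q else 0)"
    by (intro sum.cong refl) (simp only: lessThan_iff if_mod)
  also have "\<dots> = (\<Sum>i<m. coeff u i * coeff v i ^ q)"
    by (simp add: sum.delta)
  finally show ?thesis .
qed

lemma Lf_shift: "degree R < m \<Longrightarrow> j < m \<Longrightarrow> Lf (monom 1 (m - j) * R) = coeff R j"
proof -
  assume dR: "degree R < m" and j: "j < m"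
  have "monom 1 (m - j) * R = (\<Sum>i<m. monom (coeff R i) (i + (m - j)))"
    by (subst poly_sum_lt[OF dR]) (simp add: sum_distrib_left mult_monom add.commute)
  hence "Lf (monom 1 (m - j) * R) = (\<Sum>i<m. if (i + (m - j)) mod m = 0 then coeff R i else 0)"
    by (simp only: Lf_sum Lf_monom)
  also have "\<dots> = (\<Sum>i<m. if i = j then coeff R i else 0)"
    by (intro sum.cong refl) (use mod_iff_eq j in auto)
  also have "\<dots> = coeff R j" using j by (simp add: sum.delta)
  finally show ?thesis .
qed

lemma Lf_all: "(\<forall>a. Lf (a * W) = 0) \<Longrightarrow> N dvd W"
proof -
  assume H: "\<forall>a. Lf (a * W) = 0"
  let ?R = "W mod N"
  have "?R = 0"
  proof (rule poly_eqI)
    fix j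
    show "coeff ?R j = coeff 0 j"
    proof (cases "j < m")
      case True
      have "Lf (monom 1 (m - j) * ?R) = Lf (monom 1 (m - j) * W)"
        using Lf_mod[of W "monom 1 (m - j)"] by (simp add: mult.commute)
      also have "\<dots> = 0" using H by simp
      finally show ?thesis using Lf_shift[OF deg_mod True] by simp
    next
      case False
      thus ?thesis using deg_mod[of W] by (simp add: coeff_eq_0)
    qed
  qed
  thus ?thesis by (simp add: dvd_eq_mod_eq_0)
qed

end


context qcl begin

lemma hat_mod: "N dvd conj_transpose q m (A mod N) - sg A"
proof -
  have 1: "N dvd conj_transpose q m (A mod N) - sg (A mod N)"
    using deg_mod[of A] by (intro hat_sg) simp
  have "N dvd A mod N - A" using N_dvd_mod[of A] by (simp add: dvd_diff_commute)
  hence 2: "N dvd sg (A mod N) - sg A" by (rule sg_cong)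
  have "conj_transpose q m (A mod N) - sg A
        = (conj_transpose q m (A mod N) - sg (A mod N)) + (sg (A mod N) - sg A)" by simp
  thus ?thesis using 1 2 by (metis dvd_add)
qed

definition hat :: "'a poly \<Rightarrow> 'a poly" where "hat u = conj_transpose q m u"

context
  fixes g11 g12 g22 :: "'a poly"
begin

lemma herm_c:
  assumes "v \<in> R2 m"
  shows "herm q m ((a * g11 + b * 0) mod xm1 m, (a * g12 + b * g22) mod xm1 m) v
       = Lf (a * (g11 * hat (fst v) + g12 * hat (snd v)) + b * (g22 * hat (snd v)))"
proof -
  obtain v1 v2 where v: "v = (v1, v2)" by (cases v)
  have d1: "degree v1 < m" and d2: "degree v2 < m" using assms v by (auto simp: R2_def)
  have "herm q m ((a * g11 + b * 0) mod xm1 m, (a * g12 + b * g22) mod xm1 m) v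
       = Lf ((a * g11) mod N * hat v1) + Lf ((a * g12 + b * g22) mod N * hat v2)"
    unfolding herm_def v hat_def N_def[symmetric]
    by (simp add: Lf_hat[OF deg_mod d1] Lf_hat[OF deg_mod d2])
  also have "\<dots> = Lf (a * g11 * hat v1) + Lf ((a * g12 + b * g22) * hat v2)"
    by (simp only: Lf_mod)
  also have "\<dots> = Lf (a * g11 * hat v1 + (a * g12 + b * g22) * hat v2)"
    by (simp only: Lf_add)
  also have "a * g11 * hat v1 + (a * g12 + b * g22) * hat v2
      = a * (g11 * hat v1 + g12 * hat v2) + b * (g22 * hat v2)"
    by (simp add: algebra_simps)
  finally show ?thesis using v by simp
qed

lemma dual_iff:
  assumes "v \<in> R2 m"
  shows "(\<forall>c \<in> qc_code m g11 g12 g22. herm q m c v = 0) \<longleftrightarrow>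
     N dvd g11 * hat (fst v) + g12 * hat (snd v) \<and> N dvd g22 * hat (snd v)"
  (is "?L \<longleftrightarrow> N dvd ?W \<and> N dvd ?Z")
proof
  assume L: ?L
  have H: "Lf (a * ?W + b * ?Z) = 0" for a b
  proof -
    have "((a * g11 + b * 0) mod xm1 m, (a * g12 + b * g22) mod xm1 m) \<in> qc_code m g11 g12 g22"
      unfolding qc_code_def by blast
    thus ?thesis using L herm_c[OF assms, of a b] by simp
  qed
  have "N dvd ?W" by (rule Lf_all) (use H[where b = 0] in simp)
  moreover have "N dvd ?Z" by (rule Lf_all) (use H[where a = 0] in simp)
  ultimately show "N dvd ?W \<and> N dvd ?Z" ..
next
  assume R: "N dvd ?W \<and> N dvd ?Z"
  show ?L
  proof
    fix c assume "c \<in> qc_code m g11 g12 g22"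
    then obtain a b where c: "c = ((a * g11 + b * 0) mod xm1 m, (a * g12 + b * g22) mod xm1 m)"
      unfolding qc_code_def by blast
    have "N dvd a * ?W + b * ?Z" using R by simp
    thus "herm q m c v = 0" unfolding c herm_c[OF assms] by (rule Lf_dvd)
  qed
qed

definition LOC :: bool where
  "LOC \<longleftrightarrow> (\<forall>a b. N dvd g11 * sg (a * g11) + g12 * sg (a * g12 + b * g22)
      \<and> N dvd g22 * sg (a * g12 + b * g22) \<longrightarrow> N dvd a * g11 \<and> N dvd a * g12 + b * g22)"

lemma cong_E:
  "(N dvd g11 * hat ((a * g11) mod N) + g12 * hat ((a * g12 + b * g22) mod N) \<longleftrightarrow>
    N dvd g11 * sg (a * g11) + g12 * sg (a * g12 + b * g22))
   \<and> (N dvd g22 * hat ((a * g12 + b * g22) mod N) \<longleftrightarrow> N dvd g22 * sg (a * g12 + b * g22))"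
proof
  have "g11 * hat ((a * g11) mod N) + g12 * hat ((a * g12 + b * g22) mod N)
     - (g11 * sg (a * g11) + g12 * sg (a * g12 + b * g22))
     = g11 * (hat ((a * g11) mod N) - sg (a * g11))
       + g12 * (hat ((a * g12 + b * g22) mod N) - sg (a * g12 + b * g22))"
    by (simp add: algebra_simps)
  moreover have "N dvd \<dots>" using hat_mod unfolding hat_def by (intro dvd_add dvd_mult)
  ultimately show "N dvd g11 * hat ((a * g11) mod N) + g12 * hat ((a * g12 + b * g22) mod N) \<longleftrightarrow>
    N dvd g11 * sg (a * g11) + g12 * sg (a * g12 + b * g22)"
    using dvd_via_N[OF dvd_refl] by metis
next
  have "g22 * hat ((a * g12 + b * g22) mod N) - g22 * sg (a * g12 + b * g22)
      = g22 * (hat ((a * g12 + b * g22) mod N) - sg (a * g12 + b * g22))"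
    by (simp add: algebra_simps)
  moreover have "N dvd \<dots>" using hat_mod unfolding hat_def by (intro dvd_mult)
  ultimately show "N dvd g22 * hat ((a * g12 + b * g22) mod N) \<longleftrightarrow> N dvd g22 * sg (a * g12 + b * g22)"
    using dvd_via_N[OF dvd_refl] by metis
qed

lemma LCD_iff: "herm_LCD q m (qc_code m g11 g12 g22) \<longleftrightarrow> LOC"
proof -
  let ?C = "qc_code m g11 g12 g22"
  have memC: "c \<in> ?C \<longleftrightarrow> (\<exists>a b. c = ((a * g11) mod N, (a * g12 + b * g22) mod N))" for c
    unfolding qc_code_def N_def by auto
  have R2C: "((a * g11) mod N, (a * g12 + b * g22) mod N) \<in> R2 m" for a b
    using deg_mod by (simp add: R2_def)
  have inD: "((a * g11) mod N, (a * g12 + b * g22) mod N) \<in> herm_dual q m ?C \<longleftrightarrow>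
      N dvd g11 * sg (a * g11) + g12 * sg (a * g12 + b * g22)
      \<and> N dvd g22 * sg (a * g12 + b * g22)" for a b
    unfolding herm_dual_def using R2C[of a b] dual_iff[OF R2C[of a b]] cong_E[of a b]
    by (simp add: hat_def)
  have z: "(0, 0) \<in> ?C \<inter> herm_dual q m ?C"
  proof -
    have "(0::'a poly, 0::'a poly) = ((0 * g11) mod N, (0 * g12 + 0 * g22) mod N)" by simp
    hence "(0::'a poly, 0::'a poly) \<in> ?C" unfolding memC by blast
    moreover have "(0::'a poly, 0::'a poly) \<in> herm_dual q m ?C"
      unfolding herm_dual_def R2_def herm_def using mpos qpos by (simp add: power_0_left)
    ultimately show ?thesis by blast
  qed
  show ?thesis
  proof
    assume H: "herm_LCD q m ?C"
    show LOC unfolding LOC_def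
    proof (intro allI impI)
      fix a b
      assume E: "N dvd g11 * sg (a * g11) + g12 * sg (a * g12 + b * g22) \<and> N dvd g22 * sg (a * g12 + b * g22)"
      have "((a * g11) mod N, (a * g12 + b * g22) mod N) \<in> ?C \<inter> herm_dual q m ?C"
        using inD[of a b] E memC by blast
      hence "((a * g11) mod N, (a * g12 + b * g22) mod N) = (0, 0)"
        using H unfolding herm_LCD_def by blast
      thus "N dvd a * g11 \<and> N dvd a * g12 + b * g22" by (simp add: dvd_eq_mod_eq_0)
    qed
  next
    assume L: LOC
    have "?C \<inter> herm_dual q m ?C \<subseteq> {(0, 0)}"
    proof
      fix c assume c: "c \<in> ?C \<inter> herm_dual q m ?C"
      then obtain a b where cab: "c = ((a * g11) mod N, (a * g12 + b * g22) mod N)" using memC by blast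
      hence "N dvd g11 * sg (a * g11) + g12 * sg (a * g12 + b * g22) \<and> N dvd g22 * sg (a * g12 + b * g22)"
        using c inD by blast
      hence "N dvd a * g11 \<and> N dvd a * g12 + b * g22" using L unfolding LOC_def by blast
      thus "c \<in> {(0, 0)}" using cab by (simp add: dvd_eq_mod_eq_0)
    qed
    thus "herm_LCD q m ?C" using z unfolding herm_LCD_def by blast
  qed
qed

end
end


context qcl begin

lemma sqf_dvdI:
  assumes dN: "d dvd N" and H: "\<And>f. prime f \<Longrightarrow> f dvd N \<Longrightarrow> f dvd d \<Longrightarrow> f dvd X"
  shows "d dvd X"
proof -
  obtain e where e: "N = d * e" using dN by (auto elim: dvdE)
  have e0: "e \<noteq> 0" using e N_nz by auto
  have "N dvd X * e"
  proof (rule N_dvdI)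
    fix f :: "'a poly" assume fp: "prime f" and fN: "f dvd N"
    show "f dvd X * e"
    proof (cases "f dvd d")
      case True thus ?thesis using H[OF fp fN] by simp
    next
      case False
      hence "f dvd e" using fN e fp prime_dvd_mult_iff by metis
      thus ?thesis by simp
    qed
  qed
  hence "d * e dvd X * e" using e by simp
  thus ?thesis using e0 by simp
qed

lemma prime_sq_dvd: "prime f \<Longrightarrow> f dvd N \<Longrightarrow> d dvd N \<Longrightarrow> \<not> f * f dvd d"
proof
  assume "prime f" "f dvd N" "d dvd N" "f * f dvd d"
  hence "f * f dvd N" using dvd_trans by metis
  thus False using prime_not_sq \<open>prime f\<close> \<open>f dvd N\<close> by blast
qed

lemma Mf_dvd: "prime f \<Longrightarrow> f dvd N \<Longrightarrow> prime h \<Longrightarrow> h dvd N \<Longrightarrow> h \<noteq> f \<Longrightarrow> h dvd N div f"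
proof -
  assume fp: "prime f" and fN: "f dvd N" and hp: "prime h" and hN: "h dvd N" and hf: "h \<noteq> f"
  have "\<not> h dvd f" using primes_dvd_imp_eq hp fp hf by blast
  moreover have "h dvd f * (N div f)" using hN fN by simp
  ultimately show ?thesis using hp prime_dvd_mult_iff by blast
qed

lemma Mf_ndvd: "prime f \<Longrightarrow> f dvd N \<Longrightarrow> \<not> f dvd N div f"
proof
  assume fp: "prime f" and fN: "f dvd N" and "f dvd N div f"
  have "f * f dvd f * (N div f)" using \<open>f dvd N div f\<close> by (rule mult_dvd_mono[OF dvd_refl])
  also have "f * (N div f) = N" using fN by simp
  finally have "f * f dvd N" .
  thus False using prime_not_sq fp fN by blast
qed

lemma bar_eq_imp: "prime f \<Longrightarrow> f dvd N \<Longrightarrow> prime h \<Longrightarrow> h dvd N \<Longrightarrow> bar h = bar f \<Longrightarrow> h = f"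
  using bar_bar by metis

lemma sg_Mf:
  assumes fp: "prime f" and fN: "f dvd N" and Y: "bar f dvd Y"
  shows "N dvd sg (N div f) * Y"
proof (rule N_dvdI)
  fix h :: "'a poly" assume hp: "prime h" and hN: "h dvd N"
  show "h dvd sg (N div f) * Y"
  proof (cases "h = bar f")
    case True thus ?thesis using Y by simp
  next
    case False
    have "bar h \<noteq> f"
    proof
      assume "bar h = f"
      hence "bar (bar h) = bar f" by simp
      thus False using bar_bar[OF hp hN] False by simp
    qed
    hence "bar h dvd N div f" using Mf_dvd[OF fp fN bar_prime[OF hp hN] bar_N[OF hp hN]] by blast
    hence "h dvd sg (N div f)" using sg_bar[OF hp hN] by blast
    thus ?thesis by simp
  qed
qed

context
  fixes g11 g12 g22 :: "'a poly"
begin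

lemma WIT:
  assumes L: "LOC g11 g12 g22" and fp: "prime f" and fN: "f dvd N"
    and E2: "bar f dvd g22 * sg (a0 * g12 + b0 * g22)"
    and E1: "bar f dvd g11 * sg (a0 * g11) + g12 * sg (a0 * g12 + b0 * g22)"
  shows "f dvd a0 * g11 \<and> f dvd a0 * g12 + b0 * g22"
proof -
  let ?M = "N div f"
  let ?V = "a0 * g12 + b0 * g22"
  have e1: "(?M * a0) * g11 = ?M * (a0 * g11)" by (simp add: algebra_simps)
  have e2: "(?M * a0) * g12 + (?M * b0) * g22 = ?M * ?V" by (simp add: algebra_simps)
  have s1: "sg ((?M * a0) * g11) = sg ?M * sg (a0 * g11)" by (simp only: e1 sg_mult)
  have s2: "sg ((?M * a0) * g12 + (?M * b0) * g22) = sg ?M * sg ?V" by (simp only: e2 sg_mult)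
  have "N dvd g11 * sg ((?M * a0) * g11) + g12 * sg ((?M * a0) * g12 + (?M * b0) * g22)"
  proof -
    have "g11 * sg ((?M * a0) * g11) + g12 * sg ((?M * a0) * g12 + (?M * b0) * g22)
        = sg ?M * (g11 * sg (a0 * g11) + g12 * sg ?V)"
      by (simp only: s1 s2 distrib_left mult.left_commute)
    thus ?thesis using sg_Mf[OF fp fN E1] by (simp only:)
  qed
  moreover have "N dvd g22 * sg ((?M * a0) * g12 + (?M * b0) * g22)"
  proof -
    have "g22 * sg ((?M * a0) * g12 + (?M * b0) * g22) = sg ?M * (g22 * sg ?V)"
      by (simp only: s2 mult.left_commute)
    thus ?thesis using sg_Mf[OF fp fN E2] by (simp only:)
  qed
  ultimately have "N dvd (?M * a0) * g11 \<and> N dvd (?M * a0) * g12 + (?M * b0) * g22"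
    using L unfolding LOC_def by blast
  hence "f dvd ?M * (a0 * g11) \<and> f dvd ?M * ?V" unfolding e1 e2 using fN dvd_trans by blast
  thus ?thesis using Mf_ndvd[OF fp fN] fp prime_dvd_mult_iff by blast
qed

end
end


context qcl begin

lemma scr_iff:
  assumes hN: "h dvd N"
  shows "self_conj_recip q h \<longleftrightarrow> (\<forall>f. prime f \<longrightarrow> f dvd N \<longrightarrow> f dvd h \<longrightarrow> bar f dvd h)"
proof
  assume "self_conj_recip q h"
  then obtain c where c: "conj_recip q h = smult c h" by (auto simp: self_conj_recip_def)
  have h0: "h \<noteq> 0" using hN dvdN_ne0 by blast
  have c0: "c \<noteq> 0" using c h0 by (metis cr_eq0 smult_0_left)
  show "\<forall>f. prime f \<longrightarrow> f dvd N \<longrightarrow> f dvd h \<longrightarrow> bar f dvd h"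
  proof (intro allI impI)
    fix f :: "'a poly" assume fp: "prime f" and fN: "f dvd N" and fh: "f dvd h"
    have "bar (bar f) dvd h" using fh bar_bar[OF fp fN] by simp
    hence "bar f dvd conj_recip q h" using cr_bar[OF bar_prime[OF fp fN] bar_N[OF fp fN]] by blast
    thus "bar f dvd h" using c c0 by (simp add: dvd_smult_iff)
  qed
next
  assume H: "\<forall>f. prime f \<longrightarrow> f dvd N \<longrightarrow> f dvd h \<longrightarrow> bar f dvd h"
  have "h dvd conj_recip q h"
  proof (rule sqf_dvdI[OF hN])
    fix f :: "'a poly" assume fp: "prime f" and fN: "f dvd N" and fh: "f dvd h"
    show "f dvd conj_recip q h" using cr_bar[OF fp fN] H fp fN fh by blast
  qed
  then obtain w where w: "conj_recip q h = h * w" by (auto elim: dvdE)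
  have h0: "h \<noteq> 0" using hN dvdN_ne0 by blast
  have "degree (conj_recip q h) = degree h" using degree_cr dvdN_coeff0[OF hN] by blast
  moreover have "w \<noteq> 0" using w h0 by (metis cr_eq0 mult_zero_right)
  ultimately have "degree w = 0" using w h0 by (simp add: degree_mult_eq)
  then obtain c where "w = [:c:]" by (metis degree_eq_zeroE)
  hence "conj_recip q h = smult c h" using w by simp
  thus "self_conj_recip q h" by (auto simp: self_conj_recip_def)
qed

lemma gcd1_iff:
  assumes aN: "a dvd N"
  shows "gcd a b = 1 \<longleftrightarrow> (\<forall>f. prime f \<longrightarrow> f dvd N \<longrightarrow> f dvd a \<longrightarrow> \<not> f dvd b)"
proof
  assume g: "gcd a b = 1"
  show "\<forall>f. prime f \<longrightarrow> f dvd N \<longrightarrow> f dvd a \<longrightarrow> \<not> f dvd b"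
  proof (intro allI impI notI)
    fix f :: "'a poly" assume "prime f" "f dvd N" "f dvd a" "f dvd b"
    hence "f dvd gcd a b" by simp
    thus False using g \<open>prime f\<close> by (simp add: prime_def prime_elem_def)
  qed
next
  assume H: "\<forall>f. prime f \<longrightarrow> f dvd N \<longrightarrow> f dvd a \<longrightarrow> \<not> f dvd b"
  show "gcd a b = 1"
  proof (rule ccontr)
    assume "gcd a b \<noteq> 1"
    hence nu: "\<not> is_unit (gcd a b)" using coprime_iff_gcd_eq_1 is_unit_gcd by blast
    have "gcd a b \<noteq> 0" using aN dvdN_ne0 by auto
    then obtain p where p: "p dvd gcd a b" "prime p" using prime_divisor_exists nu by blast
    hence "p dvd a" "p dvd b" by auto
    moreover have "p dvd N" using \<open>p dvd a\<close> aN dvd_trans by blast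
    ultimately show False using H p by blast
  qed
qed

context
  fixes g11 g12 g22 :: "'a poly"
  assumes A1: "g11 dvd N" and A2: "g22 dvd N" and A3: "degree g12 < degree g22"
    and A4: "g11 * g22 dvd N * g12"
begin

abbreviation "gg \<equiv> gcd g11 g22"
abbreviation "ll \<equiv> N div lcm g11 g22"
abbreviation "g22' \<equiv> g22 div gcd g11 g22"
abbreviation "rr \<equiv> gcd g22' (conj_recip q g22')"
abbreviation "tt \<equiv> g22' div rr"

lemma sq_contra: "prime f \<Longrightarrow> f dvd N \<Longrightarrow> d dvd N \<Longrightarrow> d = x * y \<Longrightarrow> f dvd x \<Longrightarrow> f dvd y \<Longrightarrow> False"
proof -
  assume "prime f" "f dvd N" "d dvd N" "d = x * y" "f dvd x" "f dvd y"
  hence "f * f dvd d" by (simp add: mult_dvd_mono)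
  thus False using prime_sq_dvd \<open>prime f\<close> \<open>f dvd N\<close> \<open>d dvd N\<close> by blast
qed

lemma gg_N: "gg dvd N" using A1 dvd_trans gcd_dvd1 by blast

lemma g22'_N: "g22' dvd N"
proof -
  have "g22' dvd g22" using gcd_dvd2[of g11 g22] by (metis dvd_mult_div_cancel dvd_triv_right)
  thus ?thesis using A2 dvd_trans by blast
qed

lemma g22_split: "g22 = gg * g22'" by simp

lemma ll_N: "ll dvd N"
proof -
  have "lcm g11 g22 dvd N" using A1 A2 by simp
  hence "N = lcm g11 g22 * ll" by simp
  thus ?thesis by (metis dvd_triv_right)
qed

lemma rr_N: "rr dvd N" using g22'_N dvd_trans gcd_dvd1 by blast

lemma g22'_split: "g22' = rr * tt" by (rule dvd_mult_div_cancel[OF gcd_dvd1, symmetric])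

lemma tt_N: "tt dvd N"
proof -
  have "tt dvd rr * tt" by (rule dvd_triv_right)
  hence "tt dvd g22'" by (simp only: g22'_split[symmetric])
  thus ?thesis using g22'_N by (rule dvd_trans)
qed

context
  fixes f :: "'a poly"
  assumes fp: "prime f" and fN: "f dvd N"
begin

lemma d_gg: "f dvd gg \<longleftrightarrow> f dvd g11 \<and> f dvd g22" by simp

lemma d_g12: "f dvd g11 \<Longrightarrow> f dvd g22 \<Longrightarrow> f dvd g12"
proof (rule ccontr)
  assume a: "f dvd g11" "f dvd g22" "\<not> f dvd g12"
  have "f * f dvd g11 * g22" using a by (simp add: mult_dvd_mono)
  hence "f * f dvd N * g12" using A4 dvd_trans by blast
  moreover have "coprime (f * f) g12" using a(3) fp prime_imp_coprime by auto
  ultimately have "f * f dvd N" using coprime_dvd_mult_left_iff by blast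
  thus False using prime_not_sq fp fN by blast
qed

lemma d_ll: "f dvd ll \<longleftrightarrow> \<not> f dvd g11 \<and> \<not> f dvd g22"
proof
  assume fl: "f dvd ll"
  have NN: "N = lcm g11 g22 * ll" using A1 A2 by simp
  show "\<not> f dvd g11 \<and> \<not> f dvd g22"
  proof (intro conjI notI)
    assume "f dvd g11"
    hence "f dvd lcm g11 g22" using dvd_lcm1 dvd_trans by blast
    thus False using sq_contra[OF fp fN dvd_refl NN _ fl] by blast
  next
    assume "f dvd g22"
    hence "f dvd lcm g11 g22" using dvd_lcm2 dvd_trans by blast
    thus False using sq_contra[OF fp fN dvd_refl NN _ fl] by blast
  qed
next
  assume nd: "\<not> f dvd g11 \<and> \<not> f dvd g22"
  have NN: "N = lcm g11 g22 * ll" using A1 A2 by simp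
  have "lcm g11 g22 dvd g11 * g22" by (simp add: lcm_least)
  hence "\<not> f dvd lcm g11 g22" using nd fp prime_dvd_mult_iff dvd_trans by blast
  thus "f dvd ll" using fN NN fp prime_dvd_mult_iff by metis
qed

lemma d_g22': "f dvd g22' \<longleftrightarrow> f dvd g22 \<and> \<not> f dvd g11"
proof
  assume a: "f dvd g22'"
  have "f dvd g22" using a g22_split by (metis dvd_mult2 mult.commute)
  moreover have "\<not> f dvd g11"
  proof
    assume "f dvd g11"
    hence "f dvd gg" using \<open>f dvd g22\<close> by simp
    thus False using sq_contra[OF fp fN A2 g22_split _ a] by blast
  qed
  ultimately show "f dvd g22 \<and> \<not> f dvd g11" ..
next
  assume a: "f dvd g22 \<and> \<not> f dvd g11"
  hence "\<not> f dvd gg" by simp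
  moreover have "f dvd gg * g22'" using a g22_split by metis
  ultimately show "f dvd g22'" using fp prime_dvd_mult_iff by blast
qed

lemma d_rr: "f dvd rr \<longleftrightarrow> f dvd g22' \<and> bar f dvd g22'"
  using cr_bar[OF fp fN] by simp

lemma d_tt: "f dvd tt \<longleftrightarrow> f dvd g22' \<and> \<not> bar f dvd g22'"
proof
  assume a: "f dvd tt"
  have "f dvd g22'" using a g22'_split by (metis dvd_mult2 mult.commute)
  moreover have "\<not> bar f dvd g22'"
  proof
    assume "bar f dvd g22'"
    hence "f dvd rr" using d_rr \<open>f dvd g22'\<close> by blast
    thus False using sq_contra[OF fp fN g22'_N g22'_split _ a] by blast
  qed
  ultimately show "f dvd g22' \<and> \<not> bar f dvd g22'" ..
next
  assume a: "f dvd g22' \<and> \<not> bar f dvd g22'"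
  hence "\<not> f dvd rr" using d_rr by blast
  moreover have "f dvd rr * tt" using a g22'_split by metis
  ultimately show "f dvd tt" using fp prime_dvd_mult_iff by blast
qed

end

lemma hat_K: "N dvd (g11 * conj_transpose q m g11 + g12 * conj_transpose q m g12)
               - (g11 * sg g11 + g12 * sg g12)"
proof -
  have d11: "degree g11 \<le> m" using A1 N_nz degree_N dvd_imp_degree_le by metis
  have "degree g22 \<le> m" using A2 N_nz degree_N dvd_imp_degree_le by metis
  hence d12: "degree g12 \<le> m" using A3 by simp
  have "(g11 * conj_transpose q m g11 + g12 * conj_transpose q m g12) - (g11 * sg g11 + g12 * sg g12)
      = g11 * (conj_transpose q m g11 - sg g11) + g12 * (conj_transpose q m g12 - sg g12)"
    by (simp add: algebra_simps)
  thus ?thesis using hat_sg[OF d11] hat_sg[OF d12] by (metis dvd_add dvd_mult)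
qed


lemma loc_P1:
  assumes L: "LOC g11 g12 g22" and fp: "prime f" and fN: "f dvd N" and fg: "f dvd gg"
  shows "bar f dvd gg"
proof -
  have fbp: "prime (bar f)" and fbN: "bar f dvd N" and bb: "bar (bar f) = f"
    using bar_prime[OF fp fN] bar_N[OF fp fN] bar_bar[OF fp fN] by auto
  have al: "f dvd g11" and be: "f dvd g22" using fg by auto
  have ga: "f dvd g12" using d_g12[OF fp fN al be] .
  have "bar f dvd 0 * g11 \<and> bar f dvd 0 * g12 + 1 * g22"
    by (rule WIT[OF L fbp fbN]) (simp_all add: bb be ga)
  hence b2: "bar f dvd g22" by simp
  have "bar f dvd 1 * g11 \<and> bar f dvd 1 * g12 + 0 * g22"
    by (rule WIT[OF L fbp fbN]) (simp_all add: bb be ga al)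
  hence "bar f dvd g11" by simp
  thus ?thesis using b2 by simp
qed

lemma loc_P2:
  assumes L: "LOC g11 g12 g22" and fp: "prime f" and fN: "f dvd N" and fl: "f dvd ll"
  shows "bar f dvd ll"
proof -
  have fbp: "prime (bar f)" and fbN: "bar f dvd N" and bb: "bar (bar f) = f"
    using bar_prime[OF fp fN] bar_N[OF fp fN] bar_bar[OF fp fN] by auto
  have na: "\<not> f dvd g11" and nb: "\<not> f dvd g22" using fl d_ll[OF fp fN] by auto
  have nab: "\<not> bar f dvd g11"
  proof
    assume ab: "bar f dvd g11"
    have "f dvd g22 * g11 \<and> f dvd g22 * g12 + (- g12) * g22"
      by (rule WIT[OF L fp fN]) (simp_all add: ab)
    hence "f dvd g22 * g11" by simp
    thus False using na nb fp prime_dvd_mult_iff by blast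
  qed
  have nbb: "\<not> bar f dvd g22"
  proof
    assume bb2: "bar f dvd g22"
    define s where "s = - sg g12"
    define t where "t = g11 * sg g11"
    define a0 where "a0 = g22 * s"
    define b0 where "b0 = t - g12 * s"
    have V0: "a0 * g12 + b0 * g22 = t * g22" by (simp add: a0_def b0_def algebra_simps)
    have s1: "sg (a0 * g11) = sg g22 * (- sg (sg g12)) * sg g11"
      by (simp only: a0_def s_def sg_mult sg_neg)
    have s2: "sg (t * g22) = sg g11 * sg (sg g11) * sg g22"
      by (simp only: t_def sg_mult)
    have eq: "g11 * sg (a0 * g11) + g12 * sg (t * g22)
        = sg g22 * sg g11 * (g12 * (sg (sg g11) - g11) - g11 * (sg (sg g12) - g12))"
      unfolding s1 s2 by (simp add: algebra_simps)
    have "N dvd sg g22 * sg g11 * (g12 * (sg (sg g11) - g11) - g11 * (sg (sg g12) - g12))"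
    proof -
      have "N dvd g12 * (sg (sg g11) - g11)" using sg_sg[of g11] by (rule dvd_mult)
      moreover have "N dvd g11 * (sg (sg g12) - g12)" using sg_sg[of g12] by (rule dvd_mult)
      ultimately have "N dvd g12 * (sg (sg g11) - g11) - g11 * (sg (sg g12) - g12)" by (rule dvd_diff)
      thus ?thesis by (rule dvd_mult)
    qed
    hence "N dvd g11 * sg (a0 * g11) + g12 * sg (a0 * g12 + b0 * g22)" using eq V0 by simp
    hence E1: "bar f dvd g11 * sg (a0 * g11) + g12 * sg (a0 * g12 + b0 * g22)"
      using fbN dvd_trans by blast
    have E2: "bar f dvd g22 * sg (a0 * g12 + b0 * g22)" using bb2 by simp
    have "f dvd a0 * g11 \<and> f dvd a0 * g12 + b0 * g22" by (rule WIT[OF L fp fN E2 E1])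
    hence "f dvd g11 * sg g11 * g22" using V0 t_def by simp
    hence "f dvd g11 \<or> f dvd sg g11 \<or> f dvd g22" using fp prime_dvd_mult_iff by blast
    thus False using na nb nab sg_bar[OF fp fN] by blast
  qed
  show ?thesis using d_ll[OF fbp fbN] nab nbb by blast
qed

lemma loc_P3:
  assumes L: "LOC g11 g12 g22" and fp: "prime f" and fN: "f dvd N" and ft: "f dvd tt"
  shows "\<not> f dvd g12"
proof
  assume ga: "f dvd g12"
  have fbp: "prime (bar f)" and fbN: "bar f dvd N" and bb: "bar (bar f) = f"
    using bar_prime[OF fp fN] bar_N[OF fp fN] bar_bar[OF fp fN] by auto
  have f1: "f dvd g22'" and f2: "\<not> bar f dvd g22'" using ft d_tt[OF fp fN] by auto
  have be: "f dvd g22" and na: "\<not> f dvd g11" using f1 d_g22'[OF fp fN] by auto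
  show False
  proof (cases "bar f dvd g22")
    case False
    have "bar f dvd 0 * g11 \<and> bar f dvd 0 * g12 + 1 * g22"
      by (rule WIT[OF L fbp fbN]) (simp_all add: bb be ga)
    thus False using False by simp
  next
    case True
    hence "bar f dvd g11" using f2 d_g22'[OF fbp fbN] by blast
    hence "bar f dvd gg" using True by simp
    hence "bar (bar f) dvd gg" using loc_P1[OF L fbp fbN] by blast
    thus False using bb na by simp
  qed
qed

abbreviation "KK \<equiv> g11 * conj_transpose q m g11 + g12 * conj_transpose q m g12"

lemma KK_sg: "d dvd N \<Longrightarrow> d dvd KK \<longleftrightarrow> d dvd g11 * sg g11 + g12 * sg g12"
  using dvd_via_N hat_K by blast

lemma loc_P4:
  assumes L: "LOC g11 g12 g22" and fp: "prime f" and fN: "f dvd N" and fr: "f dvd rr"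
  shows "\<not> f dvd KK"
proof
  assume fk: "f dvd KK"
  have fbp: "prime (bar f)" and fbN: "bar f dvd N" and bb: "bar (bar f) = f"
    using bar_prime[OF fp fN] bar_N[OF fp fN] bar_bar[OF fp fN] by auto
  have f1: "f dvd g22'" and f2: "bar f dvd g22'" using fr d_rr[OF fp fN] by auto
  have be: "f dvd g22" using f1 d_g22'[OF fp fN] by auto
  have nab: "\<not> bar f dvd g11" using f2 d_g22'[OF fbp fbN] by auto
  have fk2: "f dvd g11 * sg g11 + g12 * sg g12" using fk KK_sg[OF fN] by blast
  have "bar f dvd 1 * g11 \<and> bar f dvd 1 * g12 + 0 * g22"
    by (rule WIT[OF L fbp fbN]) (simp_all add: bb be fk2)
  thus False using nab by simp
qed

lemma local_ok:
  assumes P1: "\<forall>f. prime f \<longrightarrow> f dvd N \<longrightarrow> f dvd gg \<longrightarrow> bar f dvd gg"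
    and P2: "\<forall>f. prime f \<longrightarrow> f dvd N \<longrightarrow> f dvd ll \<longrightarrow> bar f dvd ll"
    and P3: "\<forall>f. prime f \<longrightarrow> f dvd N \<longrightarrow> f dvd tt \<longrightarrow> \<not> f dvd g12"
    and P4: "\<forall>f. prime f \<longrightarrow> f dvd N \<longrightarrow> f dvd rr \<longrightarrow> \<not> f dvd KK"
    and E1: "N dvd g11 * sg (a * g11) + g12 * sg (a * g12 + b * g22)"
    and E2: "N dvd g22 * sg (a * g12 + b * g22)"
    and fp: "prime f" and fN: "f dvd N"
  shows "f dvd a * g11 \<and> f dvd a * g12 + b * g22"
proof -
  let ?V = "a * g12 + b * g22"
  have fbp: "prime (bar f)" and fbN: "bar f dvd N" and bb: "bar (bar f) = f"
    using bar_prime[OF fp fN] bar_N[OF fp fN] bar_bar[OF fp fN] by auto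
  have bsg: "bar f dvd sg h \<longleftrightarrow> f dvd h" for h using bar_sg[OF fp fN] .
  have e1: "bar f dvd g11 * sg (a * g11) + g12 * sg ?V" using E1 fbN dvd_trans by blast
  have e2: "bar f dvd g22 * sg ?V" using E2 fbN dvd_trans by blast
  show ?thesis
  proof (cases "f dvd g11")
    case al: True
    show ?thesis
    proof (cases "f dvd g22")
      case be: True
      have "f dvd g12" using d_g12[OF fp fN al be] .
      thus ?thesis using al be by simp
    next
      case nb: False
      have fa: "f dvd a * g11" using al by simp
      have "f dvd ?V"
      proof (cases "bar f dvd g22")
        case False
        hence "bar f dvd sg ?V" using e2 fbp prime_dvd_mult_iff by blast
        thus ?thesis using bsg by blast
      next
        case True
        have nab: "\<not> bar f dvd g11"
        proof
          assume "bar f dvd g11"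
          hence "bar f dvd gg" using True by simp
          hence "bar (bar f) dvd gg" using P1 fbp fbN by blast
          thus False using bb nb by simp
        qed
        have "bar f dvd g22'" using True nab d_g22'[OF fbp fbN] by blast
        moreover have "\<not> bar (bar f) dvd g22'" using bb al d_g22'[OF fp fN] by simp
        ultimately have "bar f dvd tt" using d_tt[OF fbp fbN] by blast
        hence n12: "\<not> bar f dvd g12" using P3 fbp fbN by blast
        have "bar f dvd g11 * sg (a * g11)" using fa bsg by simp
        hence "bar f dvd g12 * sg ?V" using e1 dvd_add_right_iff by blast
        hence "bar f dvd sg ?V" using n12 fbp prime_dvd_mult_iff by blast
        thus ?thesis using bsg by blast
      qed
      thus ?thesis using fa by simp
    qed
  next
    case na: False
    show ?thesis
    proof (cases "f dvd g22")
      case nb: False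
      have "f dvd ll" using na nb d_ll[OF fp fN] by blast
      hence "bar f dvd ll" using P2 fp fN by blast
      hence nab: "\<not> bar f dvd g11" and nbb: "\<not> bar f dvd g22" using d_ll[OF fbp fbN] by auto
      have "bar f dvd sg ?V" using e2 nbb fbp prime_dvd_mult_iff by blast
      hence fV: "f dvd ?V" using bsg by blast
      have "bar f dvd g12 * sg ?V" using \<open>bar f dvd sg ?V\<close> by simp
      hence "bar f dvd g11 * sg (a * g11)" using e1 dvd_add_left_iff by blast
      hence "bar f dvd sg (a * g11)" using nab fbp prime_dvd_mult_iff by blast
      thus ?thesis using fV bsg by blast
    next
      case be: True
      have f22: "f dvd g22'" using na be d_g22'[OF fp fN] by blast
      have "f dvd a"
      proof (cases "bar f dvd g11")
        case ab: True
        have nbb: "\<not> bar f dvd g22"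
        proof
          assume "bar f dvd g22"
          hence "bar f dvd gg" using ab by simp
          hence "bar (bar f) dvd gg" using P1 fbp fbN by blast
          thus False using bb na by simp
        qed
        have "bar f dvd sg ?V" using e2 nbb fbp prime_dvd_mult_iff by blast
        hence "f dvd ?V" using bsg by blast
        moreover have "f dvd b * g22" using be by simp
        ultimately have "f dvd a * g12" using dvd_add_left_iff by blast
        moreover have "\<not> bar f dvd g22'" using ab d_g22'[OF fbp fbN] by blast
        hence "f dvd tt" using f22 d_tt[OF fp fN] by blast
        hence "\<not> f dvd g12" using P3 fp fN by blast
        ultimately show ?thesis using fp prime_dvd_mult_iff by blast
      next
        case nab: False
        have bbb: "bar f dvd g22"
        proof (rule ccontr)
          assume "\<not> bar f dvd g22"
          hence "bar f dvd ll" using nab d_ll[OF fbp fbN] by blast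
          hence "bar (bar f) dvd ll" using P2 fbp fbN by blast
          thus False using bb be d_ll[OF fp fN] by simp
        qed
        have "bar f dvd g22'" using bbb nab d_g22'[OF fbp fbN] by blast
        moreover have "bar (bar f) dvd g22'" using bb f22 by simp
        ultimately have "bar f dvd rr" using d_rr[OF fbp fbN] by blast
        hence "\<not> bar f dvd KK" using P4 fbp fbN by blast
        hence nK: "\<not> bar f dvd g11 * sg g11 + g12 * sg g12" using KK_sg[OF fbN] by blast
        have exp: "g11 * sg (a * g11) + g12 * sg ?V
           = sg a * (g11 * sg g11 + g12 * sg g12) + g12 * sg b * sg g22"
          by (simp add: sg_mult sg_add algebra_simps)
        have "bar f dvd sg g22" using be bsg by blast
        hence "bar f dvd g12 * sg b * sg g22" by simp
        hence "bar f dvd sg a * (g11 * sg g11 + g12 * sg g12)"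
          using e1 exp dvd_add_left_iff by metis
        hence "bar f dvd sg a" using nK fbp prime_dvd_mult_iff by blast
        thus ?thesis using bsg by blast
      qed
      thus ?thesis using be by simp
    qed
  qed
qed

lemma main_ctx:
  "LOC g11 g12 g22 \<longleftrightarrow>
    (self_conj_recip q gg \<and> self_conj_recip q ll \<and> gcd tt g12 = 1 \<and> gcd rr KK = 1)"
proof -
  have "self_conj_recip q gg \<longleftrightarrow> (\<forall>f. prime f \<longrightarrow> f dvd N \<longrightarrow> f dvd gg \<longrightarrow> bar f dvd gg)"
    by (rule scr_iff[OF gg_N])
  moreover have "self_conj_recip q ll \<longleftrightarrow> (\<forall>f. prime f \<longrightarrow> f dvd N \<longrightarrow> f dvd ll \<longrightarrow> bar f dvd ll)"
    by (rule scr_iff[OF ll_N])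
  moreover have "gcd tt g12 = 1 \<longleftrightarrow> (\<forall>f. prime f \<longrightarrow> f dvd N \<longrightarrow> f dvd tt \<longrightarrow> \<not> f dvd g12)"
    by (rule gcd1_iff[OF tt_N])
  moreover have "gcd rr KK = 1 \<longleftrightarrow> (\<forall>f. prime f \<longrightarrow> f dvd N \<longrightarrow> f dvd rr \<longrightarrow> \<not> f dvd KK)"
    by (rule gcd1_iff[OF rr_N])
  moreover have "LOC g11 g12 g22 \<longleftrightarrow>
      (\<forall>f. prime f \<longrightarrow> f dvd N \<longrightarrow> f dvd gg \<longrightarrow> bar f dvd gg) \<and>
      (\<forall>f. prime f \<longrightarrow> f dvd N \<longrightarrow> f dvd ll \<longrightarrow> bar f dvd ll) \<and>
      (\<forall>f. prime f \<longrightarrow> f dvd N \<longrightarrow> f dvd tt \<longrightarrow> \<not> f dvd g12) \<and>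
      (\<forall>f. prime f \<longrightarrow> f dvd N \<longrightarrow> f dvd rr \<longrightarrow> \<not> f dvd KK)"
  proof
    assume L: "LOC g11 g12 g22"
    show "(\<forall>f. prime f \<longrightarrow> f dvd N \<longrightarrow> f dvd gg \<longrightarrow> bar f dvd gg) \<and>
      (\<forall>f. prime f \<longrightarrow> f dvd N \<longrightarrow> f dvd ll \<longrightarrow> bar f dvd ll) \<and>
      (\<forall>f. prime f \<longrightarrow> f dvd N \<longrightarrow> f dvd tt \<longrightarrow> \<not> f dvd g12) \<and>
      (\<forall>f. prime f \<longrightarrow> f dvd N \<longrightarrow> f dvd rr \<longrightarrow> \<not> f dvd KK)"
      using loc_P1[OF L] loc_P2[OF L] loc_P3[OF L] loc_P4[OF L] by blast
  next
    assume P: "(\<forall>f. prime f \<longrightarrow> f dvd N \<longrightarrow> f dvd gg \<longrightarrow> bar f dvd gg) \<and>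
      (\<forall>f. prime f \<longrightarrow> f dvd N \<longrightarrow> f dvd ll \<longrightarrow> bar f dvd ll) \<and>
      (\<forall>f. prime f \<longrightarrow> f dvd N \<longrightarrow> f dvd tt \<longrightarrow> \<not> f dvd g12) \<and>
      (\<forall>f. prime f \<longrightarrow> f dvd N \<longrightarrow> f dvd rr \<longrightarrow> \<not> f dvd KK)"
    show "LOC g11 g12 g22" unfolding LOC_def
    proof (intro allI impI)
      fix a b
      assume E: "N dvd g11 * sg (a * g11) + g12 * sg (a * g12 + b * g22) \<and>
         N dvd g22 * sg (a * g12 + b * g22)"
      have H: "f dvd a * g11 \<and> f dvd a * g12 + b * g22" if "prime f" "f dvd N" for f
        using local_ok[of a b f] P E that by blast
      show "N dvd a * g11 \<and> N dvd a * g12 + b * g22"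
        using N_dvdI[of "a * g11"] N_dvdI[of "a * g12 + b * g22"] H by blast
    qed
  qed
  ultimately show ?thesis by (simp only:)
qed

end
end

theorem theorem6p3:
  fixes q m p e :: nat
    and g11 g12 g22 :: "'a::{finite, field_gcd} poly"
  assumes "prime p" and "e \<ge> 1" and "q = p ^ e"
    and "card (UNIV :: 'a set) = q ^ 2"
    and "m \<ge> 1" and "coprime q m"
    and "g11 dvd xm1 m" and "g22 dvd xm1 m"
    and "degree g12 < degree g22"
    and "g11 * g22 dvd xm1 m * g12"
  shows "herm_LCD q m (qc_code m g11 g12 g22) \<longleftrightarrow>
    (let g = gcd g11 g22;
         l = xm1 m div lcm g11 g22;
         g11' = g11 div g;
         g22' = g22 div g;
         r22 = gcd g22' (conj_recip q g22');
         t22 = g22' div r22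
     in self_conj_recip q g
        \<and> self_conj_recip q l
        \<and> gcd t22 g12 = 1
        \<and> gcd r22 (g11 * conj_transpose q m g11 + g12 * conj_transpose q m g12) = 1)"
  proof -
  note fr = frob_facts[OF assms(1,2,3,4,6)]
  have p0: "0 < p" using assms(1) prime_gt_0_nat by blast
  hence qpos: "q \<ge> 1" using assms(3) by (simp add: Suc_le_eq)
  interpret Q: qcl q m "TYPE('a)"
    by standard (use fr assms(5) qpos in auto)
  have A1: "g11 dvd Q.N" and A2: "g22 dvd Q.N" using assms(7,8) by (simp_all add: Q.N_def)
  have A4: "g11 * g22 dvd Q.N * g12" using assms(10) by (simp add: Q.N_def)
  have E1: "herm_LCD q m (qc_code m g11 g12 g22) \<longleftrightarrow> Q.LOC g11 g12 g22" by (rule Q.LCD_iff)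
  note E2 = Q.main_ctx[OF A1 A2 assms(9) A4, unfolded Q.N_def]
  show ?thesis unfolding Let_def using E1 E2 by (simp only:)
qed

end
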